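(* Let $n,k \in \mathbb{N}$ and let $f \colon \Delta_k^n \to \mathbb{R}$ be a $1$-concave function. Then for every $(i_1,\ldots,i_k) \in \Delta_k^n$, $$f(i_1,\ldots,i_k) \geq \sum_{j=1}^k \frac{i_j}{n} f(ne_j) \quad\text{and}\quad e^{f(i_1,\ldots,i_k)} \geq \prod_{j=1}^k \big(e^{f(ne_j)}\big)^{i_j/n},$$ where $e_1,\ldots,e_k$ are the standard basis vectors of $\mathbb{R}^k$.
   Context: $\Delta_k^n$ is the set of $I \in \mathbb{N}_0^k$ with $i_1+\cdots+i_k = n$. A function $f \colon \Delta_k^n \to \mathbb{R}$ is $1$-concave if for every $y \in \Delta_k^n$ and $j_1 \neq j_2$, with $L := \{s \in \mathbb{Z} : y + s(e_{j_1}-e_{j_2}) \in \Delta_k^n\}$ and $g(s) := f(y + s(e_{j_1}-e_{j_2}))$, one has $g(\sum_r\lambda_r s_r) \geq \sum_r \lambda_r g(s_r)$ whenever $s_r \in L$, $\lambda_r \geq 0$, $\sum_r\lambda_r = 1$, $\sum_r \lambda_r s_r \in L$. *)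

theory Defs
  imports Complex_Main
begin

text \<open>Points of Z^k are modelled as functions nat => int; coordinate j (1-based in the
paper) is index j-1 here, i.e. indices range over {..<k}, and coordinates outside are 0.\<close>

definition simplex :: "nat \<Rightarrow> nat \<Rightarrow> (nat \<Rightarrow> int) set" where
  "simplex k n = {I. (\<forall>i<k. 0 \<le> I i) \<and> (\<forall>i\<ge>k. I i = 0) \<and> (\<Sum>i<k. I i) = int n}"

definition unitv :: "nat \<Rightarrow> nat \<Rightarrow> int" where
  "unitv j = (\<lambda>i. if i = j then 1 else 0)"

definition line_pt :: "(nat \<Rightarrow> int) \<Rightarrow> nat \<Rightarrow> nat \<Rightarrow> int \<Rightarrow> nat \<Rightarrow> int" where
  "line_pt y j1 j2 s = (\<lambda>i. y i + s * (unitv j1 i - unitv j2 i))"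

definition line_set :: "nat \<Rightarrow> nat \<Rightarrow> (nat \<Rightarrow> int) \<Rightarrow> nat \<Rightarrow> nat \<Rightarrow> int set" where
  "line_set k n y j1 j2 = {s. line_pt y j1 j2 s \<in> simplex k n}"

definition one_concave :: "nat \<Rightarrow> nat \<Rightarrow> ((nat \<Rightarrow> int) \<Rightarrow> real) \<Rightarrow> bool" where
  "one_concave k n f \<longleftrightarrow>
    (\<forall>y \<in> simplex k n. \<forall>j1<k. \<forall>j2<k. j1 \<noteq> j2 \<longrightarrow>
      (let L = line_set k n y j1 j2; g = (\<lambda>s. f (line_pt y j1 j2 s)) in
       \<forall>(m::nat) (s::nat \<Rightarrow> int) (lam::nat \<Rightarrow> real) (t::int).
         (\<forall>r<m. s r \<in> L \<and> 0 \<le> lam r) \<and> (\<Sum>r<m. lam r) = 1 \<and>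
         t \<in> L \<and> real_of_int t = (\<Sum>r<m. lam r * real_of_int (s r))
         \<longrightarrow> g t \<ge> (\<Sum>r<m. lam r * g (s r))))"

end

theory Submission
  imports Defs
begin

lemma line_in_simplex:
  assumes I: "I \<in> simplex k n" and ab: "a<k" "b<k" "a\<noteq>b"
    and nn: "\<forall>i<k. 0 \<le> line_pt I a b s i"
  shows "line_pt I a b s \<in> simplex k n"
proof -
  have s1: "(\<Sum>i<k. line_pt I a b s i) = (\<Sum>i<k. I i) + s * ((\<Sum>i<k. unitv a i) - (\<Sum>i<k. unitv b i))"
    unfolding line_pt_def by (simp add: sum.distrib sum_distrib_left sum_subtractf algebra_simps)
  have "(\<Sum>i<k. unitv a i) = 1" "(\<Sum>i<k. unitv b i) = 1" using ab unfolding unitv_def by simp_all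
  with s1 I ab nn show ?thesis unfolding simplex_def line_pt_def unitv_def by auto
qed

lemma main:
  fixes k n :: nat and f :: "(nat \<Rightarrow> int) \<Rightarrow> real"
  assumes n: "n \<ge> 1" and conc: "one_concave k n f"
  shows "I \<in> simplex k n \<Longrightarrow> f I \<ge> (\<Sum>j<k. (real_of_int (I j) / real n) * f (\<lambda>i. int n * unitv j i))"
proof (induction "card {j. j<k \<and> I j \<noteq> 0}" arbitrary: I rule: less_induct)
  case less
  define c where "c j = f (\<lambda>i. int n * unitv j i)" for j
  define R where "R J = (\<Sum>j<k. (real_of_int (J j) / real n) * c j)" for J :: "nat \<Rightarrow> int"
  have I: "I \<in> simplex k n" by fact
  have Inn: "\<forall>i<k. 0 \<le> I i" and Iz: "\<forall>i\<ge>k. I i = 0" and Is: "(\<Sum>i<k. I i) = int n"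
    using I unfolding simplex_def by auto
  show ?case
  proof (cases "\<exists>a b. a<k \<and> b<k \<and> a\<noteq>b \<and> I a \<noteq> 0 \<and> I b \<noteq> 0")
    case True
    then obtain a b where ab: "a<k" "b<k" "a\<noteq>b" "I a \<noteq> 0" "I b \<noteq> 0" by blast
    have pa: "I a > 0" "I b > 0" using ab Inn by (auto simp: order_less_le)
    define P where "P = line_pt I a b (I b)"
    define Q where "Q = line_pt I a b (- I a)"
    have Pv: "P i = (if i = a then I a + I b else if i = b then 0 else I i)" for i
      using ab unfolding P_def line_pt_def unitv_def by simp
    have Qv: "Q i = (if i = a then 0 else if i = b then I a + I b else I i)" for i
      using ab unfolding Q_def line_pt_def unitv_def by simp
    have PS: "P \<in> simplex k n" unfolding P_def
      by (rule line_in_simplex[OF I ab(1-3)]) (simp add: Pv[unfolded P_def] Inn pa less_imp_le)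
    have QS: "Q \<in> simplex k n" unfolding Q_def
      by (rule line_in_simplex[OF I ab(1-3)]) (simp add: Qv[unfolded Q_def] Inn pa less_imp_le)
    have fin: "finite {j. j<k \<and> I j \<noteq> 0}" by simp
    have "{j. j<k \<and> P j \<noteq> 0} \<subset> {j. j<k \<and> I j \<noteq> 0}"
    proof -
      have "P b = 0" using Pv[of b] ab(3) by simp
      moreover have "I j \<noteq> 0" if "P j \<noteq> 0" for j
      proof (cases "j = a")
        case True thus ?thesis using ab(4) by simp
      next
        case False thus ?thesis using that Pv[of j] by (simp split: if_splits)
      qed
      ultimately show ?thesis using ab(2,5) by blast
    qed
    hence cP: "card {j. j<k \<and> P j \<noteq> 0} < card {j. j<k \<and> I j \<noteq> 0}"
      using fin by (rule psubset_card_mono[rotated])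
    have "{j. j<k \<and> Q j \<noteq> 0} \<subset> {j. j<k \<and> I j \<noteq> 0}"
    proof -
      have "Q a = 0" using Qv[of a] by simp
      moreover have "I j \<noteq> 0" if "Q j \<noteq> 0" for j
      proof (cases "j = b")
        case True thus ?thesis using ab(5) by simp
      next
        case False thus ?thesis using that Qv[of j] by (simp split: if_splits)
      qed
      ultimately show ?thesis using ab(1,4) by blast
    qed
    hence cQ: "card {j. j<k \<and> Q j \<noteq> 0} < card {j. j<k \<and> I j \<noteq> 0}"
      using fin by (rule psubset_card_mono[rotated])
    have hP: "f P \<ge> R P" using less(1)[OF cP PS] unfolding R_def c_def .
    have hQ: "f Q \<ge> R Q" using less(1)[OF cQ QS] unfolding R_def c_def .
    define d where "d = real_of_int (I a + I b)"
    have dpos: "d > 0" using pa unfolding d_def by simp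
    define l0 where "l0 = real_of_int (I a) / d"
    define l1 where "l1 = real_of_int (I b) / d"
    have l0: "l0 \<ge> 0" "l1 \<ge> 0" "l0 + l1 = 1"
    proof -
      show "l0 \<ge> 0" "l1 \<ge> 0" unfolding l0_def l1_def using pa dpos by auto
      have "l0 + l1 = d / d" unfolding l0_def l1_def d_def by (simp only: add_divide_distrib[symmetric] of_int_add)
      thus "l0 + l1 = 1" using dpos by simp
    qed
    have I0: "line_pt I a b 0 = I" unfolding line_pt_def by simp
    have conc': "f (line_pt I a b 0) \<ge> (\<Sum>r<Suc (Suc 0). (\<lambda>r. if r = 0 then l0 else l1) r *
        f (line_pt I a b ((\<lambda>r. if r = 0 then I b else - I a) r)))"
      using conc I ab unfolding one_concave_def Let_def
      apply -
      apply (drule bspec[of _ _ I], simp)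
      apply (drule spec[of _ a], drule mp, simp)
      apply (drule spec[of _ b], drule mp, simp)
      apply (drule mp, simp)
      apply (drule spec[of _ "Suc (Suc 0)"])
      apply (drule spec[of _ "\<lambda>r. if r = 0 then I b else - I a"])
      apply (drule spec[of _ "\<lambda>r. if r = 0 then l0 else l1"])
      apply (drule spec[of _ 0])
      apply (erule mp)
      using PS QS l0 I0 I pa dpos unfolding line_set_def P_def Q_def l0_def l1_def d_def
      by (auto simp: lessThan_Suc less_Suc_eq)
    hence fI: "f I \<ge> l0 * f P + l1 * f Q"
      using I0 unfolding P_def Q_def by (simp add: lessThan_Suc)
    have RI: "R I = l0 * R P + l1 * R Q"
    proof -
      have "real_of_int (I j) = l0 * real_of_int (P j) + l1 * real_of_int (Q j)" for j
        
      proof -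
        have dd: "real_of_int (I a + I b) = d" by (simp add: d_def)
        have LL: "l0 * d = real_of_int (I a)" "l1 * d = real_of_int (I b)"
          using dpos unfolding l0_def l1_def by simp_all
        have ll: "real_of_int (I j) = (l0 + l1) * real_of_int (I j)" using l0(3) by simp
        show ?thesis
        proof (cases "j = a")
          case True
          with LL ll show ?thesis using Pv[of j] Qv[of j] dd by simp
        next
          case F: False
          show ?thesis
          proof (cases "j = b")
            case True
            with LL ll F show ?thesis using Pv[of j] Qv[of j] dd by simp
          next
            case False
            with LL ll F show ?thesis using Pv[of j] Qv[of j] by (simp add: ring_distribs)
          qed
        qed
      qed
      hence "R I = (\<Sum>j<k. l0 * (real_of_int (P j) / real n * c j) + l1 * (real_of_int (Q j) / real n * c j))"
        unfolding R_def by (intro sum.cong refl) (simp add: add_divide_distrib ring_distribs)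
      thus ?thesis unfolding R_def by (simp add: sum.distrib sum_distrib_left)
    qed
    have "l0 * R P + l1 * R Q \<le> l0 * f P + l1 * f Q"
      using hP hQ l0 by (intro add_mono mult_left_mono) auto
    with fI RI show ?thesis unfolding R_def c_def by linarith
  next
    case False
    have "\<exists>j<k. I j \<noteq> 0"
    proof (rule ccontr)
      assume "\<not> ?thesis"
      hence "(\<Sum>i<k. I i) = 0" by simp
      with Is n show False by simp
    qed
    then obtain j where j: "j<k" "I j \<noteq> 0" by blast
    have oth: "\<And>i. i<k \<Longrightarrow> i \<noteq> j \<Longrightarrow> I i = 0" using False j by blast
    have Iv: "I i = (if i = j then I j else 0)" for i
      using oth Iz by (cases "i<k") auto
    have "(\<Sum>i<k. I i) = I j" by (subst Iv) (simp add: j)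
    hence Ij: "I j = int n" using Is by simp
    have Ieq: "I = (\<lambda>i. int n * unitv j i)"
      by (rule ext, subst Iv) (simp add: Ij unitv_def)
    have "(\<Sum>ja<k. real_of_int (I ja) / real n * f (\<lambda>i. int n * unitv ja i))
          = (\<Sum>ja<k. if ja = j then f (\<lambda>i. int n * unitv j i) else 0)"
      using n by (intro sum.cong refl, subst Iv) (auto simp: Ij)
    also have "\<dots> = f I" using j Ieq by simp
    finally show ?thesis by simp
  qed
qed

theorem lemma4p9:
  fixes k n :: nat and f :: "(nat \<Rightarrow> int) \<Rightarrow> real"
  assumes "n \<ge> 1"
    and "one_concave k n f"
    and "I \<in> simplex k n"
  shows "f I \<ge> (\<Sum>j<k. (real_of_int (I j) / real n) * f (\<lambda>i. int n * unitv j i)) \<and>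
         exp (f I) \<ge> (\<Prod>j<k. exp (f (\<lambda>i. int n * unitv j i)) powr (real_of_int (I j) / real n))"
proof
  have m: "f I \<ge> (\<Sum>j<k. (real_of_int (I j) / real n) * f (\<lambda>i. int n * unitv j i))"
    using main[OF assms(1,2) assms(3)] .
  thus "f I \<ge> (\<Sum>j<k. (real_of_int (I j) / real n) * f (\<lambda>i. int n * unitv j i))" .
  have "(\<Prod>j<k. exp (f (\<lambda>i. int n * unitv j i)) powr (real_of_int (I j) / real n))
      = (\<Prod>j<k. exp ((real_of_int (I j) / real n) * f (\<lambda>i. int n * unitv j i)))"
    by (intro prod.cong refl) (simp add: powr_def mult.commute)
  also have "\<dots> = exp (\<Sum>j<k. (real_of_int (I j) / real n) * f (\<lambda>i. int n * unitv j i))"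
    by (simp add: exp_sum)
  also have "\<dots> \<le> exp (f I)" using m by simp
  finally show "exp (f I) \<ge> (\<Prod>j<k. exp (f (\<lambda>i. int n * unitv j i)) powr (real_of_int (I j) / real n))" .
qed

end
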